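(* Let $L, e_i, e_j, e_h, e_w, e_{v_i}, e_{v_j}$ be mutually independent random variables, where $L, e_i, e_j, e_h, e_w$ are mean-zero Gaussian. For constants $a_i, a_j, a_h, a_w$ define $X_m = a_m L + e_m$ for $m \in \{i,j,h,w\}$. Let $f, g$ be measurable functions such that $V_i = f(X_i, e_{v_i})$ and $V_j = g(X_j, e_{v_j})$ have finite second moments. Then the tetrad constraint for the partition that does not pair $V_i$ with $V_j$ holds: $$\mathrm{Cov}(V_i,X_w)\,\mathrm{Cov}(V_j,X_h) = \mathrm{Cov}(V_i,X_h)\,\mathrm{Cov}(V_j,X_w).$$
   Context: This describes a pure 1-factor measurement model with a single latent common cause $L$ of linear Gaussian indicators, in which two of the indicators $X_i, X_j$ are replaced by variables $V_i, V_j$ that are functions of them and of independent noise terms. *)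

theory Defs
  imports "HOL-Probability.Probability"
begin

text \<open>Events generated by a random variable X with values in the measurable space N
  (the same family used in the library's indep_vars_def2).\<close>
definition rv_events :: "'s measure \<Rightarrow> ('s \<Rightarrow> 'a) \<Rightarrow> 'a measure \<Rightarrow> 's set set" where
  "rv_events M X N = {X -` A \<inter> space M | A. A \<in> sets N}"

definition cov :: "'s measure \<Rightarrow> ('s \<Rightarrow> real) \<Rightarrow> ('s \<Rightarrow> real) \<Rightarrow> real" where
  "cov M X Y = (\<integral>w. (X w - (\<integral>v. X v \<partial>M)) * (Y w - (\<integral>v. Y v \<partial>M)) \<partial>M)"

end

theory Submission
  imports Defs
begin

lemma prod_integrable_sq:
  fixes X Y :: "'s \<Rightarrow> real"
  assumes "X \<in> borel_measurable M" "Y \<in> borel_measurable M"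
    "integrable M (\<lambda>w. (X w)\<^sup>2)" "integrable M (\<lambda>w. (Y w)\<^sup>2)"
  shows "integrable M (\<lambda>w. X w * Y w)"
proof (rule Bochner_Integration.integrable_bound)
  show "integrable M (\<lambda>w. (X w)\<^sup>2 + (Y w)\<^sup>2)" using assms by auto
  show "(\<lambda>w. X w * Y w) \<in> borel_measurable M" using assms by auto
  show "AE w in M. norm (X w * Y w) \<le> norm ((X w)\<^sup>2 + (Y w)\<^sup>2)"
  proof (rule AE_I2)
    fix w
    have "2 * \<bar>X w\<bar> * \<bar>Y w\<bar> \<le> (X w)\<^sup>2 + (Y w)\<^sup>2"
      using sum_squares_bound[of "\<bar>X w\<bar>" "\<bar>Y w\<bar>"] by simp
    moreover have "0 \<le> \<bar>X w\<bar> * \<bar>Y w\<bar>" by simp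
    ultimately have "\<bar>X w\<bar> * \<bar>Y w\<bar> \<le> (X w)\<^sup>2 + (Y w)\<^sup>2"
      by linarith
    then show "norm (X w * Y w) \<le> norm ((X w)\<^sup>2 + (Y w)\<^sup>2)"
      by (simp add: abs_mult)
  qed
qed

lemma cov_expand:
  assumes P: "prob_space M"
    and iX: "integrable M X" and iY: "integrable M Y" and iXY: "integrable M (\<lambda>w. X w * Y w)"
  shows "cov M X Y = (\<integral>w. X w * Y w \<partial>M) - (\<integral>w. X w \<partial>M) * (\<integral>w. Y w \<partial>M)"
proof -
  interpret prob_space M by (rule P)
  define a where "a = (\<integral>w. X w \<partial>M)"
  define b where "b = (\<integral>w. Y w \<partial>M)"
  have eq: "(\<lambda>w. (X w - a) * (Y w - b)) = (\<lambda>w. (X w * Y w - b * X w) - (a * Y w - a * b))"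
    by (auto simp: algebra_simps)
  have "cov M X Y = (\<integral>w. (X w * Y w - b * X w) - (a * Y w - a * b) \<partial>M)"
    unfolding cov_def a_def[symmetric] b_def[symmetric] eq ..
  also have "\<dots> = (\<integral>w. X w * Y w \<partial>M) - b * a - (a * b - a * b)"
    using iX iY iXY by (simp add: a_def b_def prob_space)
  finally show ?thesis by (simp add: a_def b_def)
qed

lemma cov_lin:
  assumes P: "prob_space M"
    and iV: "integrable M V" and iL: "integrable M L" and ie: "integrable M e"
    and iVL: "integrable M (\<lambda>w. V w * L w)" and iVe: "integrable M (\<lambda>w. V w * e w)"
    and EL: "(\<integral>w. L w \<partial>M) = 0" and Ee: "(\<integral>w. e w \<partial>M) = 0"
    and EVe: "(\<integral>w. V w * e w \<partial>M) = 0"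
  shows "cov M V (\<lambda>w. a * L w + e w) = a * (\<integral>w. V w * L w \<partial>M)"
proof -
  have eq: "(\<lambda>w. V w * (a * L w + e w)) = (\<lambda>w. a * (V w * L w) + V w * e w)"
    by (auto simp: algebra_simps)
  have i2: "integrable M (\<lambda>w. V w * (a * L w + e w))"
    unfolding eq using iVL iVe by auto
  have "cov M V (\<lambda>w. a * L w + e w) = (\<integral>w. V w * (a * L w + e w) \<partial>M)
      - (\<integral>w. V w \<partial>M) * (\<integral>w. a * L w + e w \<partial>M)"
    by (rule cov_expand[OF P iV _ i2]) (use iL ie in auto)
  also have "\<dots> = a * (\<integral>w. V w * L w \<partial>M)"
    unfolding eq using iVL iVe iL ie EL Ee EVe by simp
  finally show ?thesis .
qed

lemma meas_sub:
  assumes "X \<in> measurable M N" "rv_events M X N \<subseteq> G" "G \<subseteq> Pow (space M)"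
  shows "X \<in> measurable (sigma (space M) G) N"
proof (rule measurableI)
  fix x assume "x \<in> space (sigma (space M) G)"
  then have "x \<in> space M" using assms(3) by simp
  then show "X x \<in> space N" by (rule measurable_space[OF assms(1)])
next
  fix A assume "A \<in> sets N"
  then have "X -` A \<inter> space M \<in> G" using assms(2) unfolding rv_events_def by blast
  then show "X -` A \<inter> space (sigma (space M) G) \<in> sets (sigma (space M) G)"
    using assms(3) by simp
qed

lemma indep_from_groups:
  assumes P: "prob_space M"
    and ind: "prob_space.indep_sets M E I"
    and stab: "\<And>i. i \<in> I \<Longrightarrow> Int_stable (E i)"
    and AI: "A \<subseteq> I" and kI: "k \<in> I" and kA: "k \<notin> A"
    and V: "V \<in> borel_measurable M"
    and Vs: "V \<in> borel_measurable (sigma (space M) (\<Union>i\<in>A. E i))"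
    and e: "e \<in> borel_measurable M"
    and es: "rv_events M e borel \<subseteq> E k"
  shows "prob_space.indep_var M borel V borel e"
proof -
  interpret prob_space M by (rule P)
  have Esub: "\<And>i. i \<in> I \<Longrightarrow> E i \<subseteq> Pow (space M)"
    using ind sets.sets_into_space unfolding indep_sets_def by blast
  have c: "indep_sets (\<lambda>b. sigma_sets (space M) (\<Union>i\<in>case_bool A {k} b. E i)) UNIV"
  proof (rule indep_sets_collect_sigma)
    show "indep_sets E (\<Union>j\<in>UNIV. case_bool A {k} j)"
      by (rule indep_sets_mono_index[OF _ ind]) (use AI kI in \<open>auto split: bool.split_asm\<close>)
    show "\<And>i j. j \<in> UNIV \<Longrightarrow> i \<in> case_bool A {k} j \<Longrightarrow> Int_stable (E i)"
      using stab AI kI by (auto split: bool.splits)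
    show "disjoint_family_on (case_bool A {k}) UNIV"
      unfolding disjoint_family_on_def using kA by (auto split: bool.split)
  qed
  have GP: "(\<Union>i\<in>A. E i) \<subseteq> Pow (space M)" using Esub AI by blast
  show ?thesis
    unfolding indep_var_eq
  proof (intro conjI)
    show "random_variable borel V" "random_variable borel e" using V e by auto
    show "indep_set (sigma_sets (space M) {V -` A \<inter> space M |A. A \<in> sets borel})
      (sigma_sets (space M) {e -` A \<inter> space M |A. A \<in> sets borel})"
      unfolding indep_set_def
    proof (rule indep_sets_mono_sets[OF c])
      fix b :: bool
      show "case_bool (sigma_sets (space M) {V -` A \<inter> space M |A. A \<in> sets borel})
         (sigma_sets (space M) {e -` A \<inter> space M |A. A \<in> sets borel}) b
        \<subseteq> sigma_sets (space M) (\<Union>i\<in>case_bool A {k} b. E i)"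
      proof (cases b)
        case True
        have "{V -` B \<inter> space M |B. B \<in> sets borel} \<subseteq> sigma_sets (space M) (\<Union>i\<in>A. E i)"
        proof
          fix x assume "x \<in> {V -` B \<inter> space M |B. B \<in> sets borel}"
          then obtain B where B: "B \<in> sets borel" "x = V -` B \<inter> space M" by blast
          have "V -` B \<inter> space (sigma (space M) (\<Union>i\<in>A. E i)) \<in> sets (sigma (space M) (\<Union>i\<in>A. E i))"
            using Vs B(1) by (rule measurable_sets)
          then show "x \<in> sigma_sets (space M) (\<Union>i\<in>A. E i)" using GP B(2) by simp
        qed
        then show ?thesis using True by (simp add: sigma_sets_mono)
      next
        case False
        have "{e -` B \<inter> space M |B. B \<in> sets borel} \<subseteq> E k"
          using es unfolding rv_events_def by simp
        then show ?thesis using False by (simp add: sigma_sets_subseteq)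
      qed
    qed
  qed
qed

lemma rv_events_Int_stable: "Int_stable (rv_events M X N)"
  unfolding Int_stable_def rv_events_def
proof (intro ballI)
  fix a b assume "a \<in> {X -` A \<inter> space M |A. A \<in> sets N}" "b \<in> {X -` A \<inter> space M |A. A \<in> sets N}"
  then obtain A B where "A \<in> sets N" "B \<in> sets N" "a = X -` A \<inter> space M" "b = X -` B \<inter> space M" by blast
  then show "a \<inter> b \<in> {X -` A \<inter> space M |A. A \<in> sets N}"
    by (intro CollectI exI[of _ "A \<inter> B"]) auto
qed

lemma normal_facts:
  assumes P: "prob_space M" and s: "s > 0" and D: "distributed M lborel X (normal_density 0 s)"
  shows "X \<in> borel_measurable M" "integrable M X" "integrable M (\<lambda>w. (X w)\<^sup>2)"
    "(\<integral>w. X w \<partial>M) = 0"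
proof -
  show "X \<in> borel_measurable M" using distributed_measurable[OF D] by simp
  have "integrable lborel (\<lambda>x. normal_density 0 s x * (x - 0)^1)"
    using s by (rule integrable_normal_moment)
  then show "integrable M X"
    using distributed_integrable[OF D, of "\<lambda>x. x"] by simp
  have "integrable lborel (\<lambda>x. normal_density 0 s x * (x - 0)^2)"
    using s by (rule integrable_normal_moment)
  then show "integrable M (\<lambda>w. (X w)\<^sup>2)"
    using distributed_integrable[OF D, of "\<lambda>x. x^2"] by simp
  show "(\<integral>w. X w \<partial>M) = 0"
    using prob_space.normal_distributed_expectation[OF P s D] .
qed



lemma V_meas:
  fixes L e :: "'s \<Rightarrow> real"
  assumes "L \<in> borel_measurable N" "e \<in> borel_measurable N" "evv \<in> measurable N Na"
    "f \<in> borel_measurable (borel \<Otimes>\<^sub>M Na)"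
  shows "(\<lambda>w. f (a * L w + e w, evv w)) \<in> borel_measurable N"
proof -
  have "(\<lambda>w. (a * L w + e w, evv w)) \<in> measurable N (borel \<Otimes>\<^sub>M Na)"
    by (rule measurable_Pair[OF borel_measurable_add[OF borel_measurable_times[OF borel_measurable_const assms(1)] assms(2)] assms(3)])
  from measurable_compose[OF this assms(4)] show ?thesis .
qed

lemma V_facts:
  fixes L e x :: "'s \<Rightarrow> real"
  assumes P: "prob_space M"
    and indE: "prob_space.indep_sets M E {..<7::nat}"
    and stab: "\<And>i. i \<in> {..<7::nat} \<Longrightarrow> Int_stable (E i)"
    and Esub: "\<And>i. i \<in> {..<7::nat} \<Longrightarrow> E i \<subseteq> Pow (space M)"
    and p: "p < 7" "q < 7" "r < 7" "k < 7" "k \<noteq> p" "k \<noteq> q" "k \<noteq> r"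
    and EL: "E p = rv_events M L borel" and Ee: "E q = rv_events M e borel"
    and Eev: "E r = rv_events M evv Na" and Ek: "E k = rv_events M x borel"
    and Lm: "L \<in> borel_measurable M" and em: "e \<in> borel_measurable M"
    and evm: "evv \<in> measurable M Na" and xm: "x \<in> borel_measurable M"
    and fm: "f \<in> borel_measurable (borel \<Otimes>\<^sub>M Na)"
  shows "prob_space.indep_var M borel (\<lambda>w. f (a * L w + e w, evv w)) borel x"
proof -
  let ?G = "\<Union>i\<in>{p,q,r}. E i"
  have GP: "?G \<subseteq> Pow (space M)" using Esub p by auto
  have m1: "L \<in> borel_measurable (sigma (space M) ?G)"
    by (rule meas_sub[OF Lm _ GP]) (use EL in auto)
  have m2: "e \<in> borel_measurable (sigma (space M) ?G)"
    by (rule meas_sub[OF em _ GP]) (use Ee in auto)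
  have m3: "evv \<in> measurable (sigma (space M) ?G) Na"
    by (rule meas_sub[OF evm _ GP]) (use Eev in auto)
  show ?thesis
  proof (rule indep_from_groups[OF P indE stab])
    show "{p,q,r} \<subseteq> {..<7}" "k \<in> {..<7}" "k \<notin> {p,q,r}" using p by auto
    show "(\<lambda>w. f (a * L w + e w, evv w)) \<in> borel_measurable M" by (rule V_meas[OF Lm em evm fm])
    show "(\<lambda>w. f (a * L w + e w, evv w)) \<in> borel_measurable (sigma (space M) ?G)"
      by (rule V_meas[OF m1 m2 m3 fm])
    show "x \<in> borel_measurable M" by (rule xm)
    show "rv_events M x borel \<subseteq> E k" using Ek by simp
  qed
qed

theorem mainTheorem2:
  fixes M :: "'s measure" and Na :: "'a measure" and Nb :: "'b measure"
    and L ei ej eh ew :: "'s \<Rightarrow> real"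
    and evi :: "'s \<Rightarrow> 'a" and evj :: "'s \<Rightarrow> 'b"
    and f :: "real \<times> 'a \<Rightarrow> real" and g :: "real \<times> 'b \<Rightarrow> real"
    and ai aj ah aw sL si sj sh sw :: real
  assumes P: "prob_space M"
    and rv_vi: "evi \<in> measurable M Na"
    and rv_vj: "evj \<in> measurable M Nb"
    and indep: "prob_space.indep_sets M
      (\<lambda>k::nat. if k = 0 then rv_events M L borel
                else if k = 1 then rv_events M ei borel
                else if k = 2 then rv_events M ej borel
                else if k = 3 then rv_events M eh borel
                else if k = 4 then rv_events M ew borel
                else if k = 5 then rv_events M evi Na
                else rv_events M evj Nb) {..<7}"
    and gL: "sL > 0" "distributed M lborel L (normal_density 0 sL)"
    and gi: "si > 0" "distributed M lborel ei (normal_density 0 si)"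
    and gj: "sj > 0" "distributed M lborel ej (normal_density 0 sj)"
    and gh: "sh > 0" "distributed M lborel eh (normal_density 0 sh)"
    and gw: "sw > 0" "distributed M lborel ew (normal_density 0 sw)"
    and f_meas: "f \<in> borel_measurable (borel \<Otimes>\<^sub>M Na)"
    and g_meas: "g \<in> borel_measurable (borel \<Otimes>\<^sub>M Nb)"
    and Vi2: "integrable M (\<lambda>w. (f (ai * L w + ei w, evi w))\<^sup>2)"
    and Vj2: "integrable M (\<lambda>w. (g (aj * L w + ej w, evj w))\<^sup>2)"
  shows "cov M (\<lambda>w. f (ai * L w + ei w, evi w)) (\<lambda>w. aw * L w + ew w)
           * cov M (\<lambda>w. g (aj * L w + ej w, evj w)) (\<lambda>w. ah * L w + eh w)
         = cov M (\<lambda>w. f (ai * L w + ei w, evi w)) (\<lambda>w. ah * L w + eh w)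
           * cov M (\<lambda>w. g (aj * L w + ej w, evj w)) (\<lambda>w. aw * L w + ew w)"
proof -
  interpret prob_space M by (rule P)
  define E where "E = (\<lambda>k::nat. if k = 0 then rv_events M L borel
                else if k = 1 then rv_events M ei borel
                else if k = 2 then rv_events M ej borel
                else if k = 3 then rv_events M eh borel
                else if k = 4 then rv_events M ew borel
                else if k = 5 then rv_events M evi Na
                else rv_events M evj Nb)"
  have indE: "indep_sets E {..<7}" unfolding E_def by (rule indep)
  have stab: "\<And>i. i \<in> {..<7::nat} \<Longrightarrow> Int_stable (E i)"
    by (simp add: E_def rv_events_Int_stable)
  have Esub: "\<And>i. i \<in> {..<7::nat} \<Longrightarrow> E i \<subseteq> Pow (space M)"
    using indE sets.sets_into_space unfolding indep_sets_def by blast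
  note nL = normal_facts[OF P gL]
  note ni = normal_facts[OF P gi]
  note nj = normal_facts[OF P gj]
  note nh = normal_facts[OF P gh]
  note nw = normal_facts[OF P gw]
  define Vi where "Vi = (\<lambda>w. f (ai * L w + ei w, evi w))"
  define Vj where "Vj = (\<lambda>w. g (aj * L w + ej w, evj w))"
  have Vim: "Vi \<in> borel_measurable M" unfolding Vi_def by (rule V_meas[OF nL(1) ni(1) rv_vi f_meas])
  have Vjm: "Vj \<in> borel_measurable M" unfolding Vj_def by (rule V_meas[OF nL(1) nj(1) rv_vj g_meas])
  have Vi2': "integrable M (\<lambda>w. (Vi w)\<^sup>2)" using Vi2 unfolding Vi_def .
  have Vj2': "integrable M (\<lambda>w. (Vj w)\<^sup>2)" using Vj2 unfolding Vj_def .
  have iVi: "integrable M Vi" by (rule square_integrable_imp_integrable[OF Vim Vi2'])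
  have iVj: "integrable M Vj" by (rule square_integrable_imp_integrable[OF Vjm Vj2'])
  have ind_iw: "indep_var borel Vi borel ew" unfolding Vi_def
    by (rule V_facts[OF P indE stab Esub, where p=0 and q=1 and r=5 and k=4 and L=L and e=ei and evv=evi and x=ew and f=f and Na=Na and a=ai])
       (simp_all add: E_def nL ni nw rv_vi f_meas)
  have ind_ih: "indep_var borel Vi borel eh" unfolding Vi_def
    by (rule V_facts[OF P indE stab Esub, where p=0 and q=1 and r=5 and k=3 and L=L and e=ei and evv=evi and x=eh and f=f and Na=Na and a=ai])
       (simp_all add: E_def nL ni nh rv_vi f_meas)
  have ind_jw: "indep_var borel Vj borel ew" unfolding Vj_def
    by (rule V_facts[OF P indE stab Esub, where p=0 and q=2 and r=6 and k=4 and L=L and e=ej and evv=evj and x=ew and f=g and Na=Nb and a=aj])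
       (simp_all add: E_def nL nj nw rv_vj g_meas)
  have ind_jh: "indep_var borel Vj borel eh" unfolding Vj_def
    by (rule V_facts[OF P indE stab Esub, where p=0 and q=2 and r=6 and k=3 and L=L and e=ej and evv=evj and x=eh and f=g and Na=Nb and a=aj])
       (simp_all add: E_def nL nj nh rv_vj g_meas)
  have c1: "cov M Vi (\<lambda>w. aw * L w + ew w) = aw * (\<integral>w. Vi w * L w \<partial>M)"
    by (rule cov_lin[OF P iVi nL(2) nw(2) prod_integrable_sq[OF Vim nL(1) Vi2' nL(3)]
        indep_var_integrable[OF ind_iw iVi nw(2)] nL(4) nw(4)])
       (simp add: indep_var_lebesgue_integral[OF ind_iw iVi nw(2)] nw(4))
  have c2: "cov M Vi (\<lambda>w. ah * L w + eh w) = ah * (\<integral>w. Vi w * L w \<partial>M)"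
    by (rule cov_lin[OF P iVi nL(2) nh(2) prod_integrable_sq[OF Vim nL(1) Vi2' nL(3)]
        indep_var_integrable[OF ind_ih iVi nh(2)] nL(4) nh(4)])
       (simp add: indep_var_lebesgue_integral[OF ind_ih iVi nh(2)] nh(4))
  have c3: "cov M Vj (\<lambda>w. aw * L w + ew w) = aw * (\<integral>w. Vj w * L w \<partial>M)"
    by (rule cov_lin[OF P iVj nL(2) nw(2) prod_integrable_sq[OF Vjm nL(1) Vj2' nL(3)]
        indep_var_integrable[OF ind_jw iVj nw(2)] nL(4) nw(4)])
       (simp add: indep_var_lebesgue_integral[OF ind_jw iVj nw(2)] nw(4))
  have c4: "cov M Vj (\<lambda>w. ah * L w + eh w) = ah * (\<integral>w. Vj w * L w \<partial>M)"
    by (rule cov_lin[OF P iVj nL(2) nh(2) prod_integrable_sq[OF Vjm nL(1) Vj2' nL(3)]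
        indep_var_integrable[OF ind_jh iVj nh(2)] nL(4) nh(4)])
       (simp add: indep_var_lebesgue_integral[OF ind_jh iVj nh(2)] nh(4))
  show ?thesis
    using c1 c2 c3 c4 unfolding Vi_def Vj_def by simp
qed

end
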